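(* Let $\pi$ be a probability density on $\mathbb{R}^d$ with $\pi(x)>0$ for all $x$ and $\log\pi\in C^1(\mathbb{R}^d)$, and assume: (i) there is $\gamma>0$ such that $\liminf_{|x_1|\to\infty}\Big(\inf_{(x_2,\dots,x_d)\in\mathbb{R}^{d-1}}\big|\frac{\partial\log\pi(x)}{\partial x_1}\big|\,\|x\|_2^{\gamma}\Big)>0$; (ii) for $X\sim\pi$ there is $\beta>0$ such that $\limsup_{t\to\infty}\mathbb{P}(\|X\|_2>t)\,e^{t^\beta}<\infty$. For $\lambda>0$ let $\pi^{(\lambda)}(x):=\lambda^{-1}\pi(x_1/\lambda,x_2,\dots,x_d)$, fix $\sigma>0$, and let $P^M_\lambda$ be the Metropolis--Hastings kernel with target $\pi^{(\lambda)}$ and candidate kernel $N\big(x+\frac{\sigma^2}{2}\nabla\log\pi^{(\lambda)}(x),\sigma^2\mathbb{I}_d\big)$. Then there exists $\alpha>0$ such that $\limsup_{\lambda\downarrow0}\mathrm{Gap}(P^M_\lambda)\,e^{\lambda^{-\alpha}}<\infty$, and $\alpha$ can be taken as $\alpha=\min\{\beta/2,\beta/\gamma,2/3\}$.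
   Context: Metropolis--Hastings kernel with target density $\pi$ and candidate kernel $Q(x,dy)=q(x,y)dy$: $P(x,dy)=\alpha(x,y)Q(x,dy)+r(x)\delta_x(dy)$ with acceptance probability $\min\{1,\pi(y)q(y,x)/(\pi(x)q(x,y))\}$ and $r(x)$ the rejection probability. $\mathrm{Gap}(P)=\inf_{f\in L^2_{0,1}(\pi)}\frac12\int (f(y)-f(x))^2\pi(dx)P(x,dy)$ with $L^2_{0,1}(\pi)=\{f:\mathbb{E}_\pi f=0,\mathrm{Var}_\pi f=1\}$. *)

theory Defs
  imports "HOL-Analysis.Analysis" "HOL-Probability.Probability"
begin

text \<open>Vectors in R^d are modelled as real ^ 'd for a finite index type 'd;
  the distinguished coordinate x_1 of the paper is an arbitrary fixed index k.\<close>

definition grad :: "(real ^ 'd \<Rightarrow> real) \<Rightarrow> real ^ 'd \<Rightarrow> real ^ 'd" where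
  "grad f x = (\<chi> i. frechet_derivative f (at x) (axis i 1))"

definition log_C1 :: "(real ^ 'd \<Rightarrow> real) \<Rightarrow> bool" where
  "log_C1 f \<longleftrightarrow> (\<exists>g. continuous_on UNIV g \<and>
      (\<forall>x. ((\<lambda>y. ln (f y)) has_derivative (\<lambda>h. g x \<bullet> h)) (at x)))"

definition rescale_dens :: "'d \<Rightarrow> real \<Rightarrow> (real ^ 'd \<Rightarrow> real) \<Rightarrow> real ^ 'd \<Rightarrow> real" where
  "rescale_dens k l p x = p (\<chi> i. if i = k then x $ i / l else x $ i) / l"

definition gauss_dens :: "real \<Rightarrow> real ^ 'd \<Rightarrow> real ^ 'd \<Rightarrow> real" where
  "gauss_dens s m y = (2 * pi * s\<^sup>2) powr (- real CARD('d) / 2) * exp (- (norm (y - m))\<^sup>2 / (2 * s\<^sup>2))"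

definition mala_q :: "real \<Rightarrow> (real ^ 'd \<Rightarrow> real) \<Rightarrow> real ^ 'd \<Rightarrow> real ^ 'd \<Rightarrow> real" where
  "mala_q s p x y = gauss_dens s (x + (s\<^sup>2 / 2) *\<^sub>R grad (\<lambda>z. ln (p z)) x) y"

definition mh_acc :: "(real ^ 'd \<Rightarrow> real) \<Rightarrow> (real ^ 'd \<Rightarrow> real ^ 'd \<Rightarrow> real) \<Rightarrow> real ^ 'd \<Rightarrow> real ^ 'd \<Rightarrow> real" where
  "mh_acc p q x y = min 1 (p y * q y x / (p x * q x y))"

definition mh_rej :: "(real ^ 'd \<Rightarrow> real) \<Rightarrow> (real ^ 'd \<Rightarrow> real ^ 'd \<Rightarrow> real) \<Rightarrow> real ^ 'd \<Rightarrow> real" where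
  "mh_rej p q x = 1 - enn2real (\<integral>\<^sup>+ y. ennreal (mh_acc p q x y * q x y) \<partial>lborel)"

text \<open>Integral of a nonnegative function g against the MH kernel
  P(x,dy) = alpha(x,y) q(x,y) dy + r(x) delta_x(dy).\<close>
definition mh_kernel_int :: "(real ^ 'd \<Rightarrow> real) \<Rightarrow> (real ^ 'd \<Rightarrow> real ^ 'd \<Rightarrow> real) \<Rightarrow> real ^ 'd \<Rightarrow> (real ^ 'd \<Rightarrow> ennreal) \<Rightarrow> ennreal" where
  "mh_kernel_int p q x g = (\<integral>\<^sup>+ y. ennreal (mh_acc p q x y * q x y) * g y \<partial>lborel) + ennreal (mh_rej p q x) * g x"

definition L2_01 :: "(real ^ 'd \<Rightarrow> real) \<Rightarrow> (real ^ 'd \<Rightarrow> real) set" where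
  "L2_01 p = {f. f \<in> borel_measurable lborel \<and>
      integrable (density lborel (\<lambda>x. ennreal (p x))) f \<and>
      integrable (density lborel (\<lambda>x. ennreal (p x))) (\<lambda>x. (f x)\<^sup>2) \<and>
      (\<integral>x. f x \<partial>density lborel (\<lambda>x. ennreal (p x))) = 0 \<and>
      (\<integral>x. (f x - (\<integral>z. f z \<partial>density lborel (\<lambda>x. ennreal (p x))))\<^sup>2 \<partial>density lborel (\<lambda>x. ennreal (p x))) = 1}"

definition mh_gap :: "(real ^ 'd \<Rightarrow> real) \<Rightarrow> (real ^ 'd \<Rightarrow> real ^ 'd \<Rightarrow> real) \<Rightarrow> ennreal" where
  "mh_gap p q = (INF f\<in>L2_01 p. (1/2) * (\<integral>\<^sup>+ x. mh_kernel_int p q x (\<lambda>y. ennreal ((f y - f x)\<^sup>2))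
        \<partial>density lborel (\<lambda>x. ennreal (p x))))"

end

theory Submission
  imports Defs
begin



lemma gauss_prod:
  fixes m y :: "real ^ 'd"
  assumes s: "s > 0"
  shows "gauss_dens s m y = (\<Prod>b\<in>Basis. normal_density (m \<bullet> b) s (y \<bullet> b))"
proof -
  define A where "A = 2 * pi * s\<^sup>2"
  have A: "A > 0" using s by (simp add: A_def)
  have e1: "(\<Prod>b\<in>Basis. normal_density (m \<bullet> b) s (y \<bullet> b))
     = (\<Prod>b\<in>(Basis::(real^'d) set). 1 / sqrt A) * (\<Prod>b\<in>(Basis::(real^'d) set). exp (- ((y \<bullet> b) - (m \<bullet> b))\<^sup>2 / (2 * s\<^sup>2)))"
    unfolding normal_density_def prod.distrib A_def by (rule refl)
  have e2: "(\<Prod>b\<in>(Basis::(real^'d) set). 1 / sqrt A) = (1 / sqrt A) ^ CARD('d)"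
    by simp
  have e3: "1 / sqrt A = A powr (-(1/2))"
    using A by (subst powr_minus_divide, subst powr_half_sqrt) auto
  have e4: "(A powr (-(1/2))) ^ CARD('d) = A powr (real CARD('d) * (-(1/2)))"
    using A by (subst powr_power) auto
  have e5: "real CARD('d) * (-(1/2)) = - real CARD('d) / 2" by simp
  have e6: "(\<Prod>b\<in>(Basis::(real^'d) set). exp (- ((y \<bullet> b) - (m \<bullet> b))\<^sup>2 / (2 * s\<^sup>2)))
       = exp (\<Sum>b\<in>(Basis::(real^'d) set). - ((y \<bullet> b) - (m \<bullet> b))\<^sup>2 / (2 * s\<^sup>2))"
    by (rule exp_sum[symmetric]) simp
  have e7: "(norm (y - m))\<^sup>2 = (\<Sum>b\<in>(Basis::(real^'d) set). ((y - m) \<bullet> b)\<^sup>2)"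
    unfolding power2_norm_eq_inner by (subst euclidean_inner) (simp add: power2_eq_square)
  have e8: "(\<Sum>b\<in>(Basis::(real^'d) set). - ((y \<bullet> b) - (m \<bullet> b))\<^sup>2 / (2 * s\<^sup>2)) = - (norm (y - m))\<^sup>2 / (2 * s\<^sup>2)"
    unfolding e7 inner_diff_left sum_divide_distrib[symmetric] sum_negf by (rule refl)
  have f1: "(\<Prod>b\<in>Basis. normal_density (m \<bullet> b) s (y \<bullet> b)) = (1 / sqrt A) ^ CARD('d) * exp (- (norm (y - m))\<^sup>2 / (2 * s\<^sup>2))"
    by (simp only: e1 e2 e6 e8)
  have f2: "(1 / sqrt A) ^ CARD('d) = A powr (- real CARD('d) / 2)"
    by (simp only: e3 e4 e5)
  show ?thesis unfolding f1 f2 unfolding gauss_dens_def A_def by (rule refl)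
qed

lemma gauss_int:
  fixes m :: "real ^ 'd"
  assumes s: "s > 0"
  shows "(\<integral>\<^sup>+y. ennreal (gauss_dens s m y) \<partial>lborel) = 1"
proof -
  have "(\<integral>\<^sup>+y. ennreal (gauss_dens s m y) \<partial>lborel)
      = (\<integral>\<^sup>+y. (\<Prod>b\<in>Basis. ennreal (normal_density (m \<bullet> b) s (y \<bullet> b))) \<partial>lborel)"
    by (simp add: gauss_prod[OF s] prod_ennreal)
  also have "\<dots> = (\<Prod>b\<in>(Basis::(real^'d) set). (\<integral>\<^sup>+x. ennreal (normal_density (m \<bullet> b) s x) \<partial>lborel))"
    by (rule nn_integral_lborel_prod) auto
  also have "\<dots> = 1"
  proof (rule prod.neutral, intro ballI)
    fix b :: "real^'d"
    interpret prob_space "density lborel (normal_density (m \<bullet> b) s)"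
      using s by (rule prob_space_normal_density)
    show "(\<integral>\<^sup>+x. ennreal (normal_density (m \<bullet> b) s x) \<partial>lborel) = 1"
      using emeasure_space_1 by (simp add: emeasure_density)
  qed
  finally show ?thesis .
qed



definition scl :: "'d::finite \<Rightarrow> real \<Rightarrow> real ^ 'd \<Rightarrow> real ^ 'd" where
  "scl k l u = (\<chi> i. if i = k then l * u $ i else u $ i)"
definition sinv :: "'d::finite \<Rightarrow> real \<Rightarrow> real ^ 'd \<Rightarrow> real ^ 'd" where
  "sinv k l x = (\<chi> i. if i = k then x $ i / l else x $ i)"

lemma rescale_sinv: "rescale_dens k l p x = p (sinv k l x) / l"
  unfolding rescale_dens_def sinv_def by simp

lemma sinv_scl[simp]: "l \<noteq> 0 \<Longrightarrow> sinv k l (scl k l u) = u"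
  unfolding sinv_def scl_def by (simp add: vec_eq_iff)
lemma scl_sinv[simp]: "l \<noteq> 0 \<Longrightarrow> scl k l (sinv k l u) = u"
  unfolding sinv_def scl_def by (simp add: vec_eq_iff)

lemma cont_scl: "continuous_on UNIV (scl k l)"
  unfolding scl_def by (intro continuous_on_vec_lambda, case_tac "i = k") (auto intro!: continuous_intros)
lemma cont_sinv: "continuous_on UNIV (sinv k l)"
  unfolding sinv_def by (intro continuous_on_vec_lambda, case_tac "i = k") (auto intro!: continuous_intros simp: divide_inverse)

lemma meas_scl[measurable]: "scl k l \<in> borel_measurable borel"
  by (rule borel_measurable_continuous_onI[OF cont_scl])
lemma meas_sinv[measurable]: "sinv k l \<in> borel_measurable borel"
  by (rule borel_measurable_continuous_onI[OF cont_sinv])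

lemma scl_affine:
  fixes k :: "'d::finite" and l :: real
  shows "(\<lambda>x::real^'d. 0 + (\<Sum>j\<in>Basis. ((if j = axis k 1 then l else 1) * (x \<bullet> j)) *\<^sub>R j)) = scl k l"
proof
  fix x :: "real^'d"
  show "0 + (\<Sum>j\<in>Basis. ((if j = axis k 1 then l else 1) * (x \<bullet> j)) *\<^sub>R j) = scl k l x"
  proof (subst euclidean_eq_iff, intro ballI)
    fix b :: "real^'d" assume b: "b \<in> Basis"
    then obtain i where i: "b = axis i 1" unfolding Basis_vec_def by auto
    have "(0 + (\<Sum>j\<in>Basis. ((if j = axis k 1 then l else 1) * (x \<bullet> j)) *\<^sub>R j)) \<bullet> b = (if b = axis k 1 then l else 1) * (x \<bullet> b)"
      using b by simp
    also have "\<dots> = scl k l x \<bullet> b"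
      unfolding i by (simp add: inner_axis scl_def axis_eq_axis)
    finally show "(0 + (\<Sum>j\<in>Basis. ((if j = axis k 1 then l else 1) * (x \<bullet> j)) *\<^sub>R j)) \<bullet> b = scl k l x \<bullet> b" .
  qed
qed

lemma prod_c: fixes k :: "'d::finite" and l :: real shows "(\<Prod>j\<in>(Basis::(real^'d) set). \<bar>if j = axis k 1 then l else 1\<bar>) = \<bar>l\<bar>"
proof -
  have "(\<Prod>j\<in>(Basis::(real^'d) set). \<bar>if j = axis k 1 then l else 1\<bar>) = (\<Prod>j\<in>(Basis::(real^'d) set). if j = axis k 1 then \<bar>l\<bar> else 1)"
    by (intro prod.cong) auto
  also have "\<dots> = \<bar>l\<bar>"
    by (subst prod.delta) (auto simp: Basis_vec_def)
  finally show ?thesis .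
qed

lemma change_var:
  fixes p :: "real ^ 'd::finite \<Rightarrow> real" and g :: "real ^ 'd \<Rightarrow> ennreal"
  assumes l: "l > 0" and pm[measurable]: "p \<in> borel_measurable borel" and p0: "\<And>x. p x \<ge> 0"
    and gm[measurable]: "g \<in> borel_measurable borel"
  shows "(\<integral>\<^sup>+x. ennreal (rescale_dens k l p x) * g x \<partial>lborel) = (\<integral>\<^sup>+u. ennreal (p u) * g (scl k l u) \<partial>lborel)"
proof -
  let ?c = "\<lambda>j::real^'d. if j = axis k 1 then l else 1"
  have c: "\<And>j. j \<in> Basis \<Longrightarrow> ?c j \<noteq> 0" using l by auto
  have LB: "lborel = density (distr lborel borel (scl k l)) (\<lambda>_. \<bar>l\<bar>)"
    using lborel_affine_euclidean[of ?c 0, OF c] unfolding scl_affine prod_c by simp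
  have Rm[measurable]: "rescale_dens k l p \<in> borel_measurable borel"
    unfolding rescale_sinv by measurable
  have Fm: "(\<lambda>x. ennreal (rescale_dens k l p x) * g x) \<in> borel_measurable borel"
    unfolding rescale_sinv by measurable
  have "(\<integral>\<^sup>+x. ennreal (rescale_dens k l p x) * g x \<partial>lborel)
      = (\<integral>\<^sup>+x. ennreal (rescale_dens k l p x) * g x \<partial>density (distr lborel borel (scl k l)) (\<lambda>_. \<bar>l\<bar>))"
    by (subst LB[symmetric]) (rule refl)
  also have "\<dots> = (\<integral>\<^sup>+x. ennreal \<bar>l\<bar> * (ennreal (rescale_dens k l p x) * g x) \<partial>distr lborel borel (scl k l))"
    by (intro nn_integral_density) (auto simp: Rm Fm)
  also have "\<dots> = (\<integral>\<^sup>+u. ennreal \<bar>l\<bar> * (ennreal (rescale_dens k l p (scl k l u)) * g (scl k l u)) \<partial>lborel)"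
    by (rule nn_integral_distr) (auto simp: Fm)
  also have "\<dots> = (\<integral>\<^sup>+u. ennreal (p u) * g (scl k l u) \<partial>lborel)"
  proof (rule nn_integral_cong)
    fix u :: "real^'d"
    have "ennreal \<bar>l\<bar> * ennreal (rescale_dens k l p (scl k l u)) = ennreal (p u)"
      using l p0[of u] by (simp add: rescale_sinv ennreal_mult''[symmetric])
    then show "ennreal \<bar>l\<bar> * (ennreal (rescale_dens k l p (scl k l u)) * g (scl k l u)) = ennreal (p u) * g (scl k l u)"
      by (simp add: mult.assoc[symmetric])
  qed
  finally show ?thesis .
qed



lemma gauss_meas[measurable]: "(\<lambda>y. gauss_dens s m y) \<in> borel_measurable borel"
  unfolding gauss_dens_def by measurable

lemma gauss_nonneg: "gauss_dens s m y \<ge> 0"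
  unfolding gauss_dens_def by simp

lemma gauss_pos: "s \<noteq> 0 \<Longrightarrow> gauss_dens s m y > 0"
  unfolding gauss_dens_def by simp

lemma gauss_tail:
  fixes m :: "real ^ 'd::finite" and k :: 'd
  assumes s: "s > 0" and t: "t \<ge> 0" and N: "\<And>y. y \<in> N \<Longrightarrow> \<bar>y $ k - m $ k\<bar> \<ge> t"
  shows "(\<integral>\<^sup>+y. ennreal (gauss_dens s m y * indicator N y) \<partial>lborel)
          \<le> ennreal (2 powr (real CARD('d) / 2) * exp (- t\<^sup>2 / (4 * s\<^sup>2)))"
proof -
  define C where "C = 2 powr (real CARD('d) / 2) * exp (- t\<^sup>2 / (4 * s\<^sup>2))"
  have C0: "C \<ge> 0" unfolding C_def by simp
  have s2: "sqrt 2 * s > 0" using s by simp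
  have pw: "gauss_dens s m y * indicator N y \<le> C * gauss_dens (sqrt 2 * s) m y" for y
  proof (cases "y \<in> N")
    case False then show ?thesis using C0 gauss_nonneg[of "sqrt 2 * s" m y] by simp
  next
    case True
    define n where "n = norm (y - m)"
    define A where "A = 2 * pi * s\<^sup>2"
    define e where "e = - real CARD('d) / 2"
    have A: "A > 0" using s by (simp add: A_def)
    have tn: "t \<le> n" using N[OF True] component_le_norm_cart[of "y - m" k] unfolding n_def by simp
    have tn2: "t\<^sup>2 \<le> n\<^sup>2" using tn t by (intro power_mono) auto
    have g1: "gauss_dens s m y = A powr e * exp (- n\<^sup>2 / (2 * s\<^sup>2))"
      unfolding gauss_dens_def A_def e_def n_def by (rule refl)
    have sq: "(sqrt 2 * s)\<^sup>2 = 2 * s\<^sup>2" by (simp add: power_mult_distrib)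
    have g2: "gauss_dens (sqrt 2 * s) m y = (2 * A) powr e * exp (- n\<^sup>2 / (4 * s\<^sup>2))"
      unfolding gauss_dens_def A_def e_def n_def sq by (simp add: mult_ac)
    have p2: "(2 * A) powr e = 2 powr e * A powr e"
      using A by (subst powr_mult) auto
    have p3: "2 powr (real CARD('d) / 2) * 2 powr e = 1"
      unfolding e_def by (subst powr_add[symmetric]) simp
    have ex: "exp (- n\<^sup>2 / (2 * s\<^sup>2)) \<le> exp (- t\<^sup>2 / (4 * s\<^sup>2)) * exp (- n\<^sup>2 / (4 * s\<^sup>2))"
    proof -
      have "- n\<^sup>2 / (2 * s\<^sup>2) \<le> - t\<^sup>2 / (4 * s\<^sup>2) + - n\<^sup>2 / (4 * s\<^sup>2)"
        using tn2 s by (simp add: field_simps)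
      then show ?thesis by (simp add: exp_add[symmetric])
    qed
    have "gauss_dens s m y * indicator N y = A powr e * exp (- n\<^sup>2 / (2 * s\<^sup>2))"
      using True g1 by simp
    also have "\<dots> \<le> A powr e * (exp (- t\<^sup>2 / (4 * s\<^sup>2)) * exp (- n\<^sup>2 / (4 * s\<^sup>2)))"
      by (rule mult_left_mono[OF ex]) simp
    also have "\<dots> = (2 powr (real CARD('d) / 2) * 2 powr e) * A powr e * (exp (- t\<^sup>2 / (4 * s\<^sup>2)) * exp (- n\<^sup>2 / (4 * s\<^sup>2)))"
      unfolding p3 by simp
    also have "\<dots> = C * gauss_dens (sqrt 2 * s) m y"
      unfolding g2 p2 C_def by (simp add: mult_ac)
    finally show ?thesis .
  qed
  have "(\<integral>\<^sup>+y. ennreal (gauss_dens s m y * indicator N y) \<partial>lborel) \<le> (\<integral>\<^sup>+y. ennreal C * ennreal (gauss_dens (sqrt 2 * s) m y) \<partial>lborel)"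
    by (intro nn_integral_mono) (simp add: pw ennreal_mult[symmetric] C0 gauss_nonneg ennreal_leI)
  also have "\<dots> = ennreal C * (\<integral>\<^sup>+y. ennreal (gauss_dens (sqrt 2 * s) m y) \<partial>lborel)"
    by (rule nn_integral_cmult) measurable
  also have "\<dots> = ennreal C" by (simp add: gauss_int[OF s2, of m])
  finally show ?thesis unfolding C_def .
qed



lemma swap_sym:
  fixes h :: "real^'d::finite \<Rightarrow> real^'d \<Rightarrow> real"
  assumes hm: "(\<lambda>z. h (fst z) (snd z)) \<in> borel_measurable (lborel \<Otimes>\<^sub>M lborel)"
    and hs: "\<And>x y. h x y = h y x" and B[measurable]: "B \<in> sets borel"
  shows "(\<integral>\<^sup>+x. \<integral>\<^sup>+y. ennreal (h x y * indicator B y) \<partial>lborel \<partial>lborel)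
       = (\<integral>\<^sup>+x. \<integral>\<^sup>+y. ennreal (h x y * indicator B x) \<partial>lborel \<partial>lborel)"
proof -
  have Fm: "(\<lambda>z. ennreal (h (fst z) (snd z) * indicator B (snd z))) \<in> borel_measurable (lborel \<Otimes>\<^sub>M lborel)"
    using hm by measurable
  have "(\<integral>\<^sup>+x. \<integral>\<^sup>+y. ennreal (h x y * indicator B y) \<partial>lborel \<partial>lborel)
      = (\<integral>\<^sup>+y. \<integral>\<^sup>+x. ennreal (h x y * indicator B y) \<partial>lborel \<partial>lborel)"
    using lborel_pair.Fubini[OF Fm] by simp
  also have "\<dots> = (\<integral>\<^sup>+x. \<integral>\<^sup>+y. ennreal (h x y * indicator B x) \<partial>lborel \<partial>lborel)"
    by (simp add: hs)
  finally show ?thesis .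
qed



lemma f_in_L2:
  fixes P :: "real^'d::finite \<Rightarrow> real"
  assumes Pm[measurable]: "P \<in> borel_measurable borel" and Pint: "(\<integral>\<^sup>+x. ennreal (P x) \<partial>lborel) = 1"
    and Am[measurable]: "A \<in> sets borel" and a: "a = measure (density lborel (\<lambda>x. ennreal (P x))) A" "0 < a" "a < 1"
  shows "(\<lambda>x. (indicator A x - a) / sqrt (a * (1 - a))) \<in> L2_01 P"
proof -
  define D where "D = density lborel (\<lambda>x. ennreal (P x))"
  define c where "c = sqrt (a * (1 - a))"
  have c: "c > 0" using a unfolding c_def by simp
  have c2: "c\<^sup>2 = a * (1 - a)" using a unfolding c_def by simp
  have spD: "space D = UNIV" unfolding D_def by simp
  have setsD[simp]: "sets D = sets borel" unfolding D_def by simp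
  interpret D: prob_space D
  proof
    show "emeasure D (space D) = 1"
      unfolding spD D_def using Pint by (simp add: emeasure_density)
  qed
  have aD: "measure D A = a" using a unfolding D_def by simp
  let ?f = "\<lambda>x. (indicator A x - a) / c"
  have fm: "?f \<in> borel_measurable D" by (simp add: measurable_cong_sets[OF setsD refl])
  have fb: "\<bar>?f x\<bar> \<le> 1 / c" for x
  proof -
    have "\<bar>indicator A x - a\<bar> \<le> 1" using a by (simp add: indicator_def)
    then show ?thesis using c by (simp add: abs_divide divide_right_mono)
  qed
  have intf: "integrable D ?f"
    by (rule D.integrable_const_bound[where B="1/c"]) (use fb fm c in \<open>auto simp: abs_of_pos\<close>)
  have f2m: "(\<lambda>x. (?f x)\<^sup>2) \<in> borel_measurable D" by (simp add: measurable_cong_sets[OF setsD refl])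
  have intf2: "integrable D (\<lambda>x. (?f x)\<^sup>2)"
  proof (rule D.integrable_const_bound[where B="(1/c)\<^sup>2"])
    have "(?f x)\<^sup>2 \<le> (1/c)\<^sup>2" for x
      by (metis abs_ge_zero fb power2_abs power_mono)
    then show "AE x in D. norm ((?f x)\<^sup>2) \<le> (1/c)\<^sup>2"
      by (intro AE_I2) (simp only: real_norm_def abs_of_nonneg[OF zero_le_power2])
  qed (rule f2m)
  have indm: "indicator A \<in> borel_measurable D" by (simp add: measurable_cong_sets[OF setsD refl])
  have intind: "integrable D (indicator A :: _ \<Rightarrow> real)"
    by (rule D.integrable_const_bound[where B=1]) (auto simp: indm)
  have Ef: "(\<integral>x. ?f x \<partial>D) = 0"
  proof -
    have "(\<integral>x. ?f x \<partial>D) = (\<integral>x. indicator A x - a \<partial>D) / c" by simp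
    also have "(\<integral>x. indicator A x - a \<partial>D) = (\<integral>x. indicator A x \<partial>D) - (\<integral>x. a \<partial>D)"
      by (rule Bochner_Integration.integral_diff[OF intind]) simp
    also have "\<dots> = 0" using aD spD D.prob_space[unfolded spD] by simp
    finally show ?thesis by simp
  qed
  have pw: "(?f x)\<^sup>2 = (indicator A x * (1 - 2 * a) + a\<^sup>2) / (a * (1 - a))" for x
    unfolding power_divide c2 by (simp add: indicator_def power2_eq_square algebra_simps)
  have Vf: "(\<integral>x. (?f x - (\<integral>z. ?f z \<partial>D))\<^sup>2 \<partial>D) = 1"
  proof -
    have "(\<integral>x. (?f x - (\<integral>z. ?f z \<partial>D))\<^sup>2 \<partial>D) = (\<integral>x. (indicator A x * (1 - 2 * a) + a\<^sup>2) / (a * (1 - a)) \<partial>D)"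
    proof -
      have "(\<lambda>x. (?f x - 0)\<^sup>2) = (\<lambda>x. (indicator A x * (1 - 2 * a) + a\<^sup>2) / (a * (1 - a)))"
        by (rule ext) (simp only: diff_zero pw)
      then show ?thesis unfolding Ef by simp
    qed
    also have "\<dots> = (\<integral>x. indicator A x * (1 - 2 * a) + a\<^sup>2 \<partial>D) / (a * (1 - a))" by simp
    also have "(\<integral>x. indicator A x * (1 - 2 * a) + a\<^sup>2 \<partial>D) = (\<integral>x. indicator A x * (1 - 2 * a) \<partial>D) + (\<integral>x. a\<^sup>2 \<partial>D)"
      by (rule Bochner_Integration.integral_add) (use intind in auto)
    also have "\<dots> = a * (1 - 2 * a) + a\<^sup>2" using aD spD D.prob_space[unfolded spD] by simp
    finally show ?thesis using a by (simp add: field_simps power2_eq_square)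
  qed
  show ?thesis
    unfolding L2_01_def mem_Collect_eq D_def[symmetric] c_def[symmetric]
    using intf intf2 Ef Vf by simp
qed



lemma acc_ident:
  fixes u r :: real
  assumes "u > 0" "r \<ge> 0"
  shows "u * min 1 (r / u) = min u r"
proof (cases "r \<le> u")
  case True
  then have "r / u \<le> 1" using assms by (simp add: divide_le_eq)
  then show ?thesis using True assms by (simp add: min_def)
next
  case False
  then have "\<not> r / u \<le> 1" using assms by (simp add: divide_le_eq)
  then show ?thesis using False assms by (simp add: min_def)
qed

lemma gap_le:
  fixes P :: "real^'d::finite \<Rightarrow> real" and M :: "real^'d \<Rightarrow> real^'d"
  assumes Pm[measurable]: "P \<in> borel_measurable borel" and Ppos: "\<And>x. P x > 0"
    and Pint: "(\<integral>\<^sup>+x. ennreal (P x) \<partial>lborel) = 1"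
    and Mm[measurable]: "M \<in> borel_measurable borel" and s: "s > 0"
    and Q: "Q = (\<lambda>x y. gauss_dens s (M x) y)"
    and Am[measurable]: "A \<in> sets borel"
    and a: "a = measure (density lborel (\<lambda>x. ennreal (P x))) A" "0 < a" "a < 1"
  shows "mh_gap P Q \<le> ennreal (1 / (a * (1 - a))) *
     (\<integral>\<^sup>+x. \<integral>\<^sup>+y. ennreal (min (P x * Q x y) (P y * Q y x) * indicator A x) \<partial>lborel \<partial>lborel)"
proof -
  define c where "c = sqrt (a * (1 - a))"
  have c: "c > 0" using a unfolding c_def by simp
  have c2: "c\<^sup>2 = a * (1 - a)" using a unfolding c_def by simp
  define f where "f x = (indicator A x - a) / c" for x
  define H where "H x y = min (P x * Q x y) (P y * Q y x)" for x y
  have Qpos: "Q x y > 0" for x y unfolding Q using s by (simp add: gauss_pos)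
  have H0: "H x y \<ge> 0" for x y unfolding H_def using Qpos Ppos by (simp add: less_imp_le)
  have Hs: "H x y = H y x" for x y unfolding H_def by simp
  have fL: "f \<in> L2_01 P"
    using f_in_L2[OF Pm Pint Am a] unfolding f_def c_def .
  have Hm: "(\<lambda>z. H (fst z) (snd z)) \<in> borel_measurable (lborel \<Otimes>\<^sub>M lborel)"
    unfolding H_def Q gauss_dens_def by measurable
  have accm: "(\<lambda>z. mh_acc P Q (fst z) (snd z) * Q (fst z) (snd z)) \<in> borel_measurable (lborel \<Otimes>\<^sub>M lborel)"
    unfolding mh_acc_def Q gauss_dens_def by measurable
  define K where "K x = (\<integral>\<^sup>+y. ennreal (mh_acc P Q x y * Q x y) * ennreal ((f y - f x)\<^sup>2) \<partial>lborel)" for x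
  have Km: "K \<in> borel_measurable lborel"
    unfolding K_def f_def using accm by measurable
  have kern: "mh_kernel_int P Q x (\<lambda>y. ennreal ((f y - f x)\<^sup>2)) = K x" for x
    unfolding mh_kernel_int_def K_def by simp
  have step1: "mh_gap P Q \<le> (1/2) * (\<integral>\<^sup>+x. K x \<partial>density lborel (\<lambda>x. ennreal (P x)))"
  proof -
    have "mh_gap P Q \<le> (1/2) * (\<integral>\<^sup>+ x. mh_kernel_int P Q x (\<lambda>y. ennreal ((f y - f x)\<^sup>2))
        \<partial>density lborel (\<lambda>x. ennreal (P x)))"
      unfolding mh_gap_def by (rule INF_lower[OF fL])
    then show ?thesis unfolding kern .
  qed
  have step2: "(\<integral>\<^sup>+x. K x \<partial>density lborel (\<lambda>x. ennreal (P x))) = (\<integral>\<^sup>+x. ennreal (P x) * K x \<partial>lborel)"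
    by (rule nn_integral_density) (use Km in auto)
  have step3: "ennreal (P x) * K x = (\<integral>\<^sup>+y. ennreal (H x y * (f y - f x)\<^sup>2) \<partial>lborel)" for x
  proof -
    have my: "(\<lambda>y. ennreal (mh_acc P Q x y * Q x y) * ennreal ((f y - f x)\<^sup>2)) \<in> borel_measurable lborel"
      unfolding mh_acc_def Q gauss_dens_def f_def by measurable
    have "ennreal (P x) * K x = (\<integral>\<^sup>+y. ennreal (P x) * (ennreal (mh_acc P Q x y * Q x y) * ennreal ((f y - f x)\<^sup>2)) \<partial>lborel)"
      unfolding K_def by (rule nn_integral_cmult[symmetric, OF my])
    also have "\<dots> = (\<integral>\<^sup>+y. ennreal (H x y * (f y - f x)\<^sup>2) \<partial>lborel)"
    proof (rule nn_integral_cong)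
      fix y
      have "P x * (mh_acc P Q x y * Q x y) = H x y"
      proof -
        have "P x * (mh_acc P Q x y * Q x y) = (P x * Q x y) * min 1 ((P y * Q y x) / (P x * Q x y))"
          unfolding mh_acc_def by (simp add: mult_ac)
        also have "\<dots> = H x y" unfolding H_def
          by (rule acc_ident) (use Ppos Qpos in \<open>auto intro: mult_pos_pos less_imp_le\<close>)
        finally show ?thesis .
      qed
      moreover have "mh_acc P Q x y * Q x y \<ge> 0"
        unfolding mh_acc_def using Ppos Qpos by (auto intro!: mult_nonneg_nonneg less_imp_le)
      ultimately show "ennreal (P x) * (ennreal (mh_acc P Q x y * Q x y) * ennreal ((f y - f x)\<^sup>2)) = ennreal (H x y * (f y - f x)\<^sup>2)"
        using Ppos[of x] by (simp add: ennreal_mult[symmetric] mult.assoc[symmetric])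
    qed
    finally show ?thesis .
  qed
  have sqb: "(f y - f x)\<^sup>2 \<le> (1 / c\<^sup>2) * (indicator A x + indicator A y)" for x y
  proof -
    have "(f y - f x)\<^sup>2 = (indicator A y - indicator A x)\<^sup>2 / c\<^sup>2"
      unfolding f_def using c by (simp add: field_simps power2_eq_square)
    also have "(indicator A y - indicator A x)\<^sup>2 \<le> (indicator A x + indicator A y :: real)"
      by (simp add: indicator_def)
    then have "(indicator A y - indicator A x)\<^sup>2 / c\<^sup>2 \<le> (indicator A x + indicator A y) / c\<^sup>2"
      by (rule divide_right_mono) simp
    finally show ?thesis by simp
  qed
  define \<Phi>1 where "\<Phi>1 x = (\<integral>\<^sup>+y. ennreal (H x y * indicator A x) \<partial>lborel)" for x
  define \<Phi>2 where "\<Phi>2 x = (\<integral>\<^sup>+y. ennreal (H x y * indicator A y) \<partial>lborel)" for x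
  have step4: "(\<integral>\<^sup>+y. ennreal (H x y * (f y - f x)\<^sup>2) \<partial>lborel) \<le> ennreal (1 / c\<^sup>2) * (\<Phi>1 x + \<Phi>2 x)" for x
  proof -
    have m1: "(\<lambda>y. ennreal (H x y * indicator A x)) \<in> borel_measurable lborel"
      unfolding H_def Q gauss_dens_def by measurable
    have m2: "(\<lambda>y. ennreal (H x y * indicator A y)) \<in> borel_measurable lborel"
      unfolding H_def Q gauss_dens_def by measurable
    have "(\<integral>\<^sup>+y. ennreal (H x y * (f y - f x)\<^sup>2) \<partial>lborel) \<le> (\<integral>\<^sup>+y. ennreal (1 / c\<^sup>2) * (ennreal (H x y * indicator A x) + ennreal (H x y * indicator A y)) \<partial>lborel)"
    proof (rule nn_integral_mono)
      fix y
      have "H x y * (f y - f x)\<^sup>2 \<le> H x y * ((1 / c\<^sup>2) * (indicator A x + indicator A y))"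
        by (rule mult_left_mono[OF sqb H0])
      also have "\<dots> = (1 / c\<^sup>2) * (H x y * indicator A x + H x y * indicator A y)" by (simp add: algebra_simps add_divide_distrib)
      finally have "H x y * (f y - f x)\<^sup>2 \<le> (1 / c\<^sup>2) * (H x y * indicator A x + H x y * indicator A y)" .
      then have "ennreal (H x y * (f y - f x)\<^sup>2) \<le> ennreal ((1 / c\<^sup>2) * (H x y * indicator A x + H x y * indicator A y))"
        by (rule ennreal_leI)
      also have "\<dots> = ennreal (1 / c\<^sup>2) * (ennreal (H x y * indicator A x) + ennreal (H x y * indicator A y))"
      proof -
        have n1: "H x y * indicator A x \<ge> 0" "H x y * indicator A y \<ge> 0" using H0[of x y] by auto
        have "ennreal ((1 / c\<^sup>2) * (H x y * indicator A x + H x y * indicator A y))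
            = ennreal (1 / c\<^sup>2) * ennreal (H x y * indicator A x + H x y * indicator A y)"
          by (rule ennreal_mult) (use n1 in auto)
        also have "ennreal (H x y * indicator A x + H x y * indicator A y) = ennreal (H x y * indicator A x) + ennreal (H x y * indicator A y)"
          by (rule ennreal_plus) (use n1 in auto)
        finally show ?thesis .
      qed
      finally show "ennreal (H x y * (f y - f x)\<^sup>2) \<le> ennreal (1 / c\<^sup>2) * (ennreal (H x y * indicator A x) + ennreal (H x y * indicator A y))" .
    qed
    also have "\<dots> = ennreal (1 / c\<^sup>2) * (\<Phi>1 x + \<Phi>2 x)"
      unfolding \<Phi>1_def \<Phi>2_def using m1 m2
      by (simp add: nn_integral_cmult nn_integral_add)
    finally show ?thesis .
  qed
  have P1m: "\<Phi>1 \<in> borel_measurable lborel" unfolding \<Phi>1_def H_def Q gauss_dens_def by measurable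
  have P2m: "\<Phi>2 \<in> borel_measurable lborel" unfolding \<Phi>2_def H_def Q gauss_dens_def by measurable
  have swap: "(\<integral>\<^sup>+x. \<Phi>2 x \<partial>lborel) = (\<integral>\<^sup>+x. \<Phi>1 x \<partial>lborel)"
    unfolding \<Phi>1_def \<Phi>2_def by (rule swap_sym[OF Hm Hs Am])
  have "mh_gap P Q \<le> (1/2) * (\<integral>\<^sup>+x. ennreal (P x) * K x \<partial>lborel)"
    using step1 unfolding step2 .
  also have "(\<integral>\<^sup>+x. ennreal (P x) * K x \<partial>lborel) \<le> (\<integral>\<^sup>+x. ennreal (1 / c\<^sup>2) * (\<Phi>1 x + \<Phi>2 x) \<partial>lborel)"
    by (rule nn_integral_mono) (unfold step3, rule step4)
  then have "(1/2) * (\<integral>\<^sup>+x. ennreal (P x) * K x \<partial>lborel) \<le> (1/2) * (\<integral>\<^sup>+x. ennreal (1 / c\<^sup>2) * (\<Phi>1 x + \<Phi>2 x) \<partial>lborel)"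
    by (rule mult_left_mono) simp
  also have "(\<integral>\<^sup>+x. ennreal (1 / c\<^sup>2) * (\<Phi>1 x + \<Phi>2 x) \<partial>lborel) = ennreal (1 / c\<^sup>2) * (2 * (\<integral>\<^sup>+x. \<Phi>1 x \<partial>lborel))"
    using P1m P2m swap by (simp add: nn_integral_cmult nn_integral_add mult_2)
  also have "(1/2) * (ennreal (1 / c\<^sup>2) * (2 * (\<integral>\<^sup>+x. \<Phi>1 x \<partial>lborel))) = ennreal (1 / c\<^sup>2) * (\<integral>\<^sup>+x. \<Phi>1 x \<partial>lborel)"
  proof -
    have half: "(1/2::ennreal) * 2 = 1"
      by (simp add: ennreal_divide_times)
    have "(1/2) * (ennreal (1 / c\<^sup>2) * (2 * (\<integral>\<^sup>+x. \<Phi>1 x \<partial>lborel))) = (ennreal (1 / c\<^sup>2) * (\<integral>\<^sup>+x. \<Phi>1 x \<partial>lborel)) * ((1/2) * 2)"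
      by (simp only: mult_ac)
    then show ?thesis unfolding half by simp
  qed
  finally show ?thesis unfolding c2 \<Phi>1_def H_def .
qed



lemma phi_bound:
  fixes P :: "real^'d::finite \<Rightarrow> real" and M :: "real^'d \<Rightarrow> real^'d"
  assumes Pm[measurable]: "P \<in> borel_measurable borel" and Ppos: "\<And>x. P x > 0"
    and Mm[measurable]: "M \<in> borel_measurable borel" and s: "s > 0"
    and Q: "Q = (\<lambda>x y. gauss_dens s (M x) y)"
    and Am[measurable]: "A \<in> sets borel" and Nm[measurable]: "N \<in> sets borel"
  shows "(\<integral>\<^sup>+x. \<integral>\<^sup>+y. ennreal (min (P x * Q x y) (P y * Q y x) * indicator A x) \<partial>lborel \<partial>lborel)
     \<le> (\<integral>\<^sup>+x. ennreal (P x * indicator A x) * (\<integral>\<^sup>+y. ennreal (Q x y * indicator N y) \<partial>lborel) \<partial>lborel)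
       + (\<integral>\<^sup>+x. ennreal (P x * indicator (- N) x) \<partial>lborel)"
proof -
  define H where "H x y = min (P x * Q x y) (P y * Q y x)" for x y
  have Qpos: "Q x y > 0" for x y unfolding Q using s by (simp add: gauss_pos)
  have H0: "H x y \<ge> 0" for x y unfolding H_def using Qpos Ppos by (simp add: less_imp_le)
  have Hs: "H x y = H y x" for x y unfolding H_def by simp
  have HP: "H x y \<le> P x * Q x y" for x y unfolding H_def by simp
  have Hm: "(\<lambda>z. H (fst z) (snd z)) \<in> borel_measurable (lborel \<Otimes>\<^sub>M lborel)"
    unfolding H_def Q gauss_dens_def by measurable
  have NCm[measurable]: "- N \<in> sets borel" by simp
  define T1 where "T1 x = ennreal (P x * indicator A x) * (\<integral>\<^sup>+y. ennreal (Q x y * indicator N y) \<partial>lborel)" for x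
  define T2 where "T2 x = (\<integral>\<^sup>+y. ennreal (H x y * indicator (- N) y) \<partial>lborel)" for x
  have T1m: "T1 \<in> borel_measurable lborel" unfolding T1_def Q gauss_dens_def by measurable
  have T2m: "T2 \<in> borel_measurable lborel" unfolding T2_def H_def Q gauss_dens_def by measurable
  have pw: "(\<integral>\<^sup>+y. ennreal (H x y * indicator A x) \<partial>lborel) \<le> T1 x + T2 x" for x
  proof -
    have m1: "(\<lambda>y. ennreal (Q x y * indicator N y)) \<in> borel_measurable lborel"
      unfolding Q gauss_dens_def by measurable
    have m2: "(\<lambda>y. ennreal (P x * indicator A x) * ennreal (Q x y * indicator N y)) \<in> borel_measurable lborel"
      unfolding Q gauss_dens_def by measurable
    have m3: "(\<lambda>y. ennreal (H x y * indicator (- N) y)) \<in> borel_measurable lborel"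
      unfolding H_def Q gauss_dens_def by measurable
    have "(\<integral>\<^sup>+y. ennreal (H x y * indicator A x) \<partial>lborel)
        \<le> (\<integral>\<^sup>+y. ennreal (P x * indicator A x) * ennreal (Q x y * indicator N y) + ennreal (H x y * indicator (- N) y) \<partial>lborel)"
    proof (rule nn_integral_mono)
      fix y
      show "ennreal (H x y * indicator A x) \<le> ennreal (P x * indicator A x) * ennreal (Q x y * indicator N y) + ennreal (H x y * indicator (- N) y)"
      proof (cases "y \<in> N")
        case True
        have "H x y * indicator A x \<le> P x * indicator A x * (Q x y * indicator N y)"
          using True HP[of x y] H0[of x y] by (simp add: indicator_def)
        then have "ennreal (H x y * indicator A x) \<le> ennreal (P x * indicator A x) * ennreal (Q x y * indicator N y)"
          using Ppos[of x] Qpos[of x y] by (simp add: ennreal_mult[symmetric] ennreal_leI)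
        then show ?thesis by (rule order_trans) simp
      next
        case False
        have "ennreal (H x y * indicator A x) \<le> ennreal (H x y * indicator (- N) y)"
          using False H0[of x y] by (intro ennreal_leI) (simp add: indicator_def)
        then show ?thesis by (rule order_trans) simp
      qed
    qed
    also have "\<dots> = T1 x + T2 x"
      unfolding T1_def T2_def using m1 m2 m3 by (simp add: nn_integral_add nn_integral_cmult)
    finally show ?thesis .
  qed
  have "(\<integral>\<^sup>+x. \<integral>\<^sup>+y. ennreal (H x y * indicator A x) \<partial>lborel \<partial>lborel) \<le> (\<integral>\<^sup>+x. T1 x + T2 x \<partial>lborel)"
    by (rule nn_integral_mono) (rule pw)
  also have "\<dots> = (\<integral>\<^sup>+x. T1 x \<partial>lborel) + (\<integral>\<^sup>+x. T2 x \<partial>lborel)"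
    using T1m T2m by (simp add: nn_integral_add)
  also have "(\<integral>\<^sup>+x. T2 x \<partial>lborel) = (\<integral>\<^sup>+x. \<integral>\<^sup>+y. ennreal (H x y * indicator (- N) x) \<partial>lborel \<partial>lborel)"
    unfolding T2_def by (rule swap_sym[OF Hm Hs NCm])
  also have "\<dots> \<le> (\<integral>\<^sup>+x. ennreal (P x * indicator (- N) x) \<partial>lborel)"
  proof (rule nn_integral_mono)
    fix x
    have mq: "(\<lambda>y. ennreal (Q x y)) \<in> borel_measurable lborel" unfolding Q gauss_dens_def by measurable
    have "(\<integral>\<^sup>+y. ennreal (H x y * indicator (- N) x) \<partial>lborel) \<le> (\<integral>\<^sup>+y. ennreal (P x * indicator (- N) x) * ennreal (Q x y) \<partial>lborel)"
    proof (rule nn_integral_mono)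
      fix y
      have "H x y * indicator (- N) x \<le> P x * indicator (- N) x * Q x y"
        using HP[of x y] H0[of x y] by (simp add: indicator_def)
      then show "ennreal (H x y * indicator (- N) x) \<le> ennreal (P x * indicator (- N) x) * ennreal (Q x y)"
        using Ppos[of x] Qpos[of x y] by (simp add: ennreal_mult[symmetric] ennreal_leI)
    qed
    also have "\<dots> = ennreal (P x * indicator (- N) x) * (\<integral>\<^sup>+y. ennreal (Q x y) \<partial>lborel)"
      using mq by (simp add: nn_integral_cmult)
    also have "\<dots> = ennreal (P x * indicator (- N) x)"
      unfolding Q by (simp add: gauss_int[OF s])
    finally show "(\<integral>\<^sup>+y. ennreal (H x y * indicator (- N) x) \<partial>lborel) \<le> ennreal (P x * indicator (- N) x)" .
  qed
  finally show ?thesis unfolding T1_def H_def by (simp add: add_mono)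
qed



lemma lin_sinv: "bounded_linear (sinv k l)"
proof -
  have "linear (sinv k l)"
    by (rule linearI) (simp_all add: sinv_def vec_eq_iff add_divide_distrib)
  then show ?thesis by (simp add: linear_conv_bounded_linear)
qed

lemma sinv_axis: "sinv k l (axis i 1) = axis i (if i = k then 1 / l else 1)"
  unfolding sinv_def by (simp add: vec_eq_iff axis_def)

lemma grad_plain:
  fixes p :: "real^'d::finite \<Rightarrow> real"
  assumes Gd: "((\<lambda>y. ln (p y)) has_derivative (\<lambda>h. G x \<bullet> h)) (at x)"
  shows "grad (\<lambda>z. ln (p z)) x = G x"
proof -
  have "frechet_derivative (\<lambda>z. ln (p z)) (at x) = (\<lambda>h. G x \<bullet> h)"
    using frechet_derivative_at[OF Gd] by simp
  then show ?thesis unfolding grad_def by (simp add: vec_eq_iff inner_axis)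
qed

lemma grad_rescale:
  fixes p :: "real^'d::finite \<Rightarrow> real"
  assumes pos: "\<And>x. p x > 0" and Gd: "\<And>x. ((\<lambda>y. ln (p y)) has_derivative (\<lambda>h. G x \<bullet> h)) (at x)"
    and l: "l > 0"
  shows "grad (\<lambda>z. ln (rescale_dens k l p z)) x = (\<chi> i. G (sinv k l x) $ i * (if i = k then 1 / l else 1))"
proof -
  have eqf: "(\<lambda>z. ln (rescale_dens k l p z)) = (\<lambda>z. ln (p (sinv k l z)) - ln l)"
    using l by (intro ext) (simp add: rescale_sinv ln_div pos less_imp_neq[OF pos, symmetric])
  have d: "((\<lambda>z. ln (p (sinv k l z))) has_derivative (\<lambda>h. G (sinv k l x) \<bullet> sinv k l h)) (at x)"
    using has_derivative_compose[OF bounded_linear_imp_has_derivative[OF lin_sinv] Gd] .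
  have d2: "((\<lambda>z. ln (p (sinv k l z)) - ln l) has_derivative (\<lambda>h. G (sinv k l x) \<bullet> sinv k l h - 0)) (at x)"
    by (rule has_derivative_diff[OF d has_derivative_const])
  have "frechet_derivative (\<lambda>z. ln (rescale_dens k l p z)) (at x) = (\<lambda>h. G (sinv k l x) \<bullet> sinv k l h - 0)"
    unfolding eqf using frechet_derivative_at[OF d2] by simp
  then show ?thesis unfolding grad_def by (simp add: vec_eq_iff sinv_axis inner_axis)
qed



lemma tri3: fixes g y x :: real shows "\<bar>g\<bar> \<le> \<bar>y - (x + g)\<bar> + \<bar>x\<bar> + \<bar>y\<bar>"
  by (cases "g \<ge> 0"; cases "x \<ge> 0"; cases "y \<ge> 0"; cases "y - (x + g) \<ge> 0") auto

lemma sep_aux: fixes a b g x y :: real assumes "a \<le> \<bar>g\<bar>" "\<bar>y\<bar> \<le> b" "\<bar>x\<bar> \<le> b"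
  shows "a - b - b \<le> \<bar>y - (x + g)\<bar>"
  using tri3[of g y x] assms by linarith

lemma dens_pos_cball:
  fixes p :: "real^'d::finite \<Rightarrow> real"
  assumes pm[measurable]: "p \<in> borel_measurable borel" and pos: "\<And>x. p x > 0" and r: "r > 0"
  shows "emeasure (density lborel (\<lambda>x. ennreal (p x))) (cball z r) > 0"
proof -
  have lb: "emeasure lborel (cball z r) > 0"
  proof -
    have "emeasure lborel (cball z r) = ennreal (measure lborel (cball z r))"
      using emeasure_lborel_cball_finite[of z r] by (intro emeasure_eq_ennreal_measure) auto
    then show ?thesis using content_cball_pos[OF r, of z] by simp
  qed
  have "emeasure (density lborel (\<lambda>x. ennreal (p x))) (cball z r) = (\<integral>\<^sup>+x. ennreal (p x) * indicator (cball z r) x \<partial>lborel)"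
    by (simp add: emeasure_density)
  moreover have "(\<integral>\<^sup>+x. ennreal (p x) * indicator (cball z r) x \<partial>lborel) \<noteq> 0"
  proof
    assume "(\<integral>\<^sup>+x. ennreal (p x) * indicator (cball z r) x \<partial>lborel) = 0"
    then have "AE x in lborel. ennreal (p x) * indicator (cball z r) x = 0"
    proof -
      have [measurable]: "cball z r \<in> sets borel" by simp
      have mf: "(\<lambda>x. ennreal (p x) * indicator (cball z r) x) \<in> borel_measurable lborel" by measurable
      show ?thesis using nn_integral_0_iff_AE[OF mf] \<open>_ = 0\<close> by simp
    qed
    then have "AE x in lborel. x \<notin> cball z r"
    proof eventually_elim
      fix x assume "ennreal (p x) * indicator (cball z r) x = 0"
      moreover have "ennreal (p x) > 0" using pos[of x] by simp
      ultimately show "x \<notin> cball z r" by (auto simp: indicator_def)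
    qed
    then have "emeasure lborel (cball z r) = 0"
      by (subst (asm) AE_iff_measurable[where N="cball z r"]) auto
    then show False using lb by simp
  qed
  ultimately show ?thesis by (simp add: zero_less_iff_neq_zero)
qed

lemma per_l_bound:
  fixes p :: "real^'d::finite \<Rightarrow> real" and G :: "real^'d \<Rightarrow> real^'d" and k :: 'd
  assumes pm[measurable]: "p \<in> borel_measurable borel" and pos: "\<And>x. p x > 0"
    and pint: "(\<integral>\<^sup>+x. ennreal (p x) \<partial>lborel) = 1"
    and Gc: "continuous_on UNIV G"
    and Gd: "\<And>x. ((\<lambda>y. ln (p y)) has_derivative (\<lambda>h. G x \<bullet> h)) (at x)"
    and \<sigma>: "\<sigma> > 0"
    and Km[measurable]: "K \<in> sets borel" and a0: "a0 = measure (density lborel (\<lambda>x. ennreal (p x))) K" "0 < a0" "a0 < 1"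
    and c0: "c0 > 0" and Kprop: "\<And>u. u \<in> K \<Longrightarrow> \<bar>G u $ k\<bar> \<ge> c0 \<and> 0 \<le> u $ k \<and> u $ k \<le> Tm"
    and l: "l > 0" and lsmall: "l\<^sup>2 * Tm \<le> \<sigma>\<^sup>2 * c0 / 8"
    and tail: "measure (density lborel (\<lambda>x. ennreal (p x))) {x. norm x > (\<sigma>\<^sup>2 * c0 / 8) / l\<^sup>2} \<le> Ct"
  shows "mh_gap (rescale_dens k l p) (mala_q \<sigma> (rescale_dens k l p))
     \<le> ennreal (1 / (a0 * (1 - a0))) * (ennreal (2 powr (real CARD('d) / 2) * exp (- (\<sigma>\<^sup>2 * c0 / (4 * l))\<^sup>2 / (4 * \<sigma>\<^sup>2))) + ennreal Ct)"
proof -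
  define P where "P = rescale_dens k l p"
  define m where "m x = x + (\<sigma>\<^sup>2 / 2) *\<^sub>R (\<chi> i. G (sinv k l x) $ i * (if i = k then 1 / l else 1))" for x
  define Q where "Q = mala_q \<sigma> P"
  define Dd where "Dd = \<sigma>\<^sup>2 * c0 / 8"
  define t where "t = \<sigma>\<^sup>2 * c0 / (4 * l)"
  define B where "B = 2 powr (real CARD('d) / 2) * exp (- t\<^sup>2 / (4 * \<sigma>\<^sup>2))"
  define A where "A = sinv k l -` K"
  define N where "N = {y::real^'d. \<bar>y $ k\<bar> \<le> Dd / l}"
  have B0: "B \<ge> 0" unfolding B_def by simp
  have Pm[measurable]: "P \<in> borel_measurable borel" unfolding P_def rescale_sinv by measurable
  have Ppos: "P x > 0" for x unfolding P_def rescale_sinv using pos l by simp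
  have Pint: "(\<integral>\<^sup>+x. ennreal (P x) \<partial>lborel) = 1"
    using change_var[OF l pm less_imp_le[OF pos], of "\<lambda>_. 1" k] pint unfolding P_def by simp
  have gradP: "grad (\<lambda>z. ln (P z)) x = (\<chi> i. G (sinv k l x) $ i * (if i = k then 1 / l else 1))" for x
    unfolding P_def by (rule grad_rescale[OF pos Gd l])
  have Qeq: "Q = (\<lambda>x y. gauss_dens \<sigma> (m x) y)"
    unfolding Q_def mala_q_def m_def gradP by simp
  have mc: "continuous_on UNIV m"
  proof -
    have "continuous_on UNIV (G \<circ> sinv k l)"
      by (rule continuous_on_compose[OF cont_sinv continuous_on_subset[OF Gc]]) simp
    then have "continuous_on UNIV (\<lambda>x. G (sinv k l x))" by (simp add: comp_def)
    then show ?thesis unfolding m_def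
      by (intro continuous_intros continuous_on_vec_lambda) (auto intro!: continuous_intros)
  qed
  have mm[measurable]: "m \<in> borel_measurable borel" by (rule borel_measurable_continuous_onI[OF mc])
  have Am[measurable]: "A \<in> sets borel" unfolding A_def
    using measurable_sets[OF meas_sinv Km] by simp
  have Nm[measurable]: "N \<in> sets borel" unfolding N_def by measurable
  have CVP: "(\<integral>\<^sup>+x. ennreal (P x) * g x \<partial>lborel) = (\<integral>\<^sup>+u. ennreal (p u) * g (scl k l u) \<partial>lborel)"
    if "g \<in> borel_measurable borel" for g
    unfolding P_def by (rule change_var[OF l pm less_imp_le[OF pos] that])
  have aA: "a0 = measure (density lborel (\<lambda>x. ennreal (P x))) A"
  proof -
    have "emeasure (density lborel (\<lambda>x. ennreal (P x))) A = (\<integral>\<^sup>+x. ennreal (P x) * indicator A x \<partial>lborel)"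
      by (rule emeasure_density) auto
    also have "\<dots> = (\<integral>\<^sup>+u. ennreal (p u) * indicator A (scl k l u) \<partial>lborel)"
      by (rule CVP) measurable
    also have "\<dots> = (\<integral>\<^sup>+u. ennreal (p u) * indicator K u \<partial>lborel)"
      using l by (intro nn_integral_cong) (simp add: A_def indicator_def)
    also have "\<dots> = emeasure (density lborel (\<lambda>x. ennreal (p x))) K"
      by (rule emeasure_density[symmetric]) auto
    finally show ?thesis unfolding a0 measure_def by simp
  qed
  have gap: "mh_gap P Q \<le> ennreal (1 / (a0 * (1 - a0))) *
     (\<integral>\<^sup>+x. \<integral>\<^sup>+y. ennreal (min (P x * Q x y) (P y * Q y x) * indicator A x) \<partial>lborel \<partial>lborel)"
    by (rule gap_le[OF Pm Ppos Pint mm \<sigma> Qeq Am aA a0(2,3)])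
  have phi: "(\<integral>\<^sup>+x. \<integral>\<^sup>+y. ennreal (min (P x * Q x y) (P y * Q y x) * indicator A x) \<partial>lborel \<partial>lborel)
     \<le> (\<integral>\<^sup>+x. ennreal (P x * indicator A x) * (\<integral>\<^sup>+y. ennreal (Q x y * indicator N y) \<partial>lborel) \<partial>lborel)
       + (\<integral>\<^sup>+x. ennreal (P x * indicator (- N) x) \<partial>lborel)"
    by (rule phi_bound[OF Pm Ppos mm \<sigma> Qeq Am Nm])
  have first: "(\<integral>\<^sup>+x. ennreal (P x * indicator A x) * (\<integral>\<^sup>+y. ennreal (Q x y * indicator N y) \<partial>lborel) \<partial>lborel) \<le> ennreal B"
  proof -
    have "(\<integral>\<^sup>+x. ennreal (P x * indicator A x) * (\<integral>\<^sup>+y. ennreal (Q x y * indicator N y) \<partial>lborel) \<partial>lborel)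
        \<le> (\<integral>\<^sup>+x. ennreal B * ennreal (P x) \<partial>lborel)"
    proof (rule nn_integral_mono)
      fix x
      show "ennreal (P x * indicator A x) * (\<integral>\<^sup>+y. ennreal (Q x y * indicator N y) \<partial>lborel) \<le> ennreal B * ennreal (P x)"
      proof (cases "x \<in> A")
        case False then show ?thesis by simp
      next
        case True
        define u where "u = sinv k l x"
        have uK: "u \<in> K" using True unfolding A_def u_def by simp
        have xk: "x $ k = l * u $ k" unfolding u_def sinv_def using l by simp
        have mk: "m x $ k = x $ k + (\<sigma>\<^sup>2 / 2) * (G u $ k / l)"
          unfolding m_def u_def by simp
        have Gk: "\<bar>G u $ k\<bar> \<ge> c0" and uk: "0 \<le> u $ k" "u $ k \<le> Tm" using Kprop[OF uK] by auto
        have xkb: "\<bar>x $ k\<bar> \<le> l * Tm" using uk l unfolding xk by (simp add: abs_mult)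
        have big: "\<bar>(\<sigma>\<^sup>2 / 2) * (G u $ k / l)\<bar> \<ge> \<sigma>\<^sup>2 * c0 / (2 * l)"
          using Gk l \<sigma> by (simp add: abs_mult abs_divide divide_right_mono mult_left_mono field_simps)
        have lT: "l * Tm \<le> \<sigma>\<^sup>2 * c0 / (8 * l)"
          using lsmall l by (simp add: field_simps power2_eq_square)
        have sep: "\<bar>y $ k - m x $ k\<bar> \<ge> t" if "y \<in> N" for y
        proof -
          have yk: "\<bar>y $ k\<bar> \<le> \<sigma>\<^sup>2 * c0 / (8 * l)" using that unfolding N_def Dd_def by (simp add: field_simps)
          have "\<sigma>\<^sup>2 * c0 / (2 * l) = \<sigma>\<^sup>2 * c0 / (8 * l) * 4" by (simp add: field_simps)
          have "t = \<sigma>\<^sup>2 * c0 / (2 * l) - \<sigma>\<^sup>2 * c0 / (8 * l) - \<sigma>\<^sup>2 * c0 / (8 * l)"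
            unfolding t_def using l by (simp add: field_simps)
          also have "\<dots> \<le> \<bar>y $ k - m x $ k\<bar>"
            unfolding mk by (rule sep_aux[OF big yk order_trans[OF xkb lT]])
          finally show ?thesis .
        qed
        have t0: "t \<ge> 0" unfolding t_def using l \<sigma> c0 by simp
        have "(\<integral>\<^sup>+y. ennreal (Q x y * indicator N y) \<partial>lborel) \<le> ennreal B"
          unfolding Qeq B_def by (rule gauss_tail[OF \<sigma> t0 sep])
        then have "ennreal (P x * indicator A x) * (\<integral>\<^sup>+y. ennreal (Q x y * indicator N y) \<partial>lborel) \<le> ennreal (P x * indicator A x) * ennreal B"
          by (rule mult_left_mono) simp
        then show ?thesis using True by (simp add: mult.commute)
      qed
    qed
    also have "\<dots> = ennreal B * (\<integral>\<^sup>+x. ennreal (P x) \<partial>lborel)"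
      by (rule nn_integral_cmult) measurable
    also have "\<dots> = ennreal B" unfolding Pint by simp
    finally show ?thesis .
  qed
  have second: "(\<integral>\<^sup>+x. ennreal (P x * indicator (- N) x) \<partial>lborel) \<le> ennreal Ct"
  proof -
    have "(\<integral>\<^sup>+x. ennreal (P x * indicator (- N) x) \<partial>lborel) = (\<integral>\<^sup>+x. ennreal (P x) * indicator (- N) x \<partial>lborel)"
      by (intro nn_integral_cong) (simp add: indicator_def)
    also have "\<dots> = (\<integral>\<^sup>+u. ennreal (p u) * indicator (- N) (scl k l u) \<partial>lborel)"
      by (rule CVP) measurable
    also have "\<dots> \<le> (\<integral>\<^sup>+u. ennreal (p u) * indicator {x. norm x > Dd / l\<^sup>2} u \<partial>lborel)"
    proof (rule nn_integral_mono)
      fix u :: "real^'d"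
      have "scl k l u \<in> - N \<Longrightarrow> norm u > Dd / l\<^sup>2"
      proof -
        assume "scl k l u \<in> - N"
        then have "\<bar>l * u $ k\<bar> > Dd / l" unfolding N_def scl_def by simp
        then have "l * \<bar>u $ k\<bar> > Dd / l" using l by (simp add: abs_mult)
        then have "\<bar>u $ k\<bar> > Dd / l\<^sup>2" using l by (simp add: field_simps power2_eq_square)
        then show "norm u > Dd / l\<^sup>2" using component_le_norm_cart[of u k] by linarith
      qed
      then show "ennreal (p u) * indicator (- N) (scl k l u) \<le> ennreal (p u) * indicator {x. norm x > Dd / l\<^sup>2} u"
        by (auto simp: indicator_def)
    qed
    also have "\<dots> = emeasure (density lborel (\<lambda>x. ennreal (p x))) {x. norm x > Dd / l\<^sup>2}"
      by (rule emeasure_density[symmetric]) auto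
    also have "\<dots> = ennreal (measure (density lborel (\<lambda>x. ennreal (p x))) {x. norm x > Dd / l\<^sup>2})"
    proof (rule emeasure_eq_ennreal_measure)
      have "emeasure (density lborel (\<lambda>x. ennreal (p x))) {x. norm x > Dd / l\<^sup>2} \<le> emeasure (density lborel (\<lambda>x. ennreal (p x))) UNIV"
        by (rule emeasure_mono) auto
      also have "\<dots> = 1" using pint by (simp add: emeasure_density)
      finally show "emeasure (density lborel (\<lambda>x. ennreal (p x))) {x. norm x > Dd / l\<^sup>2} \<noteq> \<top>"
        by (auto simp: top_unique)
    qed
    also have "\<dots> \<le> ennreal Ct" using tail unfolding Dd_def by (simp add: ennreal_leI)
    finally show ?thesis .
  qed
  have "mh_gap P Q \<le> ennreal (1 / (a0 * (1 - a0))) * (ennreal B + ennreal Ct)"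
    using gap phi first second by (meson add_mono mult_left_mono order_trans zero_le)
  then show ?thesis unfolding P_def Q_def B_def t_def .
qed



lemma expo_a:
  fixes l E \<alpha> :: real
  assumes l: "0 < l" "l \<le> 1" "l \<le> E" and \<alpha>: "0 < \<alpha>" "\<alpha> \<le> 1"
  shows "l powr (- \<alpha>) \<le> E / l\<^sup>2"
proof -
  have "l powr 1 \<le> l powr \<alpha>" by (rule powr_mono') (use l \<alpha> in auto)
  then have la: "l \<le> l powr \<alpha>" using l by simp
  have "l\<^sup>2 \<le> E * l" using l by (simp add: power2_eq_square mult_right_mono)
  also have "\<dots> \<le> E * l powr \<alpha>" using la l by (intro mult_left_mono) auto
  finally have *: "l\<^sup>2 \<le> E * l powr \<alpha>" .
  have pa: "l powr \<alpha> > 0" using l by simp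
  have "l powr (- \<alpha>) = 1 / l powr \<alpha>" by (simp add: powr_minus_divide)
  also have "\<dots> \<le> E / l\<^sup>2" using * pa l by (simp add: field_simps)
  finally show ?thesis .
qed

lemma expo_b:
  fixes l D \<alpha> \<beta> :: real
  assumes l: "0 < l" "l \<le> 1" "l \<le> D powr (2/3)" and \<beta>: "\<beta> > 0" and \<alpha>: "0 < \<alpha>" "\<alpha> \<le> \<beta> / 2" and D: "D > 0"
  shows "l powr (- \<alpha>) \<le> (D / l\<^sup>2) powr \<beta>"
proof -
  have l2: "l\<^sup>2 = l powr 2" using l by (simp add: powr_realpow)
  have e1: "(D / l\<^sup>2) powr \<beta> = D powr \<beta> * l powr (- (2 * \<beta>))"
  proof -
    have "(D / l\<^sup>2) powr \<beta> = D powr \<beta> / (l\<^sup>2) powr \<beta>" by (rule powr_divide)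
    also have "(l\<^sup>2) powr \<beta> = l powr (2 * \<beta>)" unfolding l2 by (rule powr_powr)
    finally show ?thesis by (simp add: powr_minus_divide)
  qed
  have e2: "l powr (- \<alpha>) = l powr (2 * \<beta> - \<alpha>) * l powr (- (2 * \<beta>))"
    by (simp add: powr_add[symmetric])
  have "l powr (2 * \<beta> - \<alpha>) \<le> l powr (3 * \<beta> / 2)"
    by (rule powr_mono') (use l \<alpha> in auto)
  also have "\<dots> \<le> (D powr (2/3)) powr (3 * \<beta> / 2)"
    by (rule powr_mono2) (use l \<beta> in auto)
  also have "\<dots> = D powr \<beta>" by (simp add: powr_powr)
  finally have "l powr (2 * \<beta> - \<alpha>) \<le> D powr \<beta>" .
  then have "l powr (2 * \<beta> - \<alpha>) * l powr (- (2 * \<beta>)) \<le> D powr \<beta> * l powr (- (2 * \<beta>))"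
    by (rule mult_right_mono) simp
  then show ?thesis unfolding e1 e2 .
qed



theorem theorem2p3:
  fixes p :: "real ^ 'd \<Rightarrow> real" and k :: 'd and \<sigma> \<gamma> \<beta> :: real
  assumes pos: "\<And>x. p x > 0"
    and dens: "(\<integral>\<^sup>+ x. ennreal (p x) \<partial>lborel) = 1"
    and C1: "log_C1 p"
    and \<gamma>_pos: "\<gamma> > 0"
    and cond_i: "Liminf at_infinity (\<lambda>t::real. INF x\<in>{x. x $ k = t}.
                   ereal (\<bar>grad (\<lambda>z. ln (p z)) x $ k\<bar> * norm x powr \<gamma>)) > 0"
    and \<beta>_pos: "\<beta> > 0"
    and cond_ii: "Limsup at_top (\<lambda>t. ereal (measure (density lborel (\<lambda>x. ennreal (p x))) {x. norm x > t}
                   * exp (t powr \<beta>))) < \<infinity>"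
    and \<sigma>_pos: "\<sigma> > 0"
  shows "Limsup (at_right 0) (\<lambda>l. mh_gap (rescale_dens k l p) (mala_q \<sigma> (rescale_dens k l p))
            * ennreal (exp (l powr (- min (min (\<beta> / 2) (\<beta> / \<gamma>)) (2 / 3))))) < \<infinity>"
proof -
  define \<alpha> where "\<alpha> = min (min (\<beta> / 2) (\<beta> / \<gamma>)) (2 / 3)"
  have \<alpha>: "0 < \<alpha>" "\<alpha> \<le> 1" "\<alpha> \<le> \<beta> / 2" unfolding \<alpha>_def using \<beta>_pos \<gamma>_pos by (auto simp: min_def)
  obtain G where Gc: "continuous_on UNIV G"
    and Gd: "\<And>x. ((\<lambda>y. ln (p y)) has_derivative (\<lambda>h. G x \<bullet> h)) (at x)"
    using C1 unfolding log_C1_def by blast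
  have lnc: "continuous_on UNIV (\<lambda>y. ln (p y))"
    by (rule has_derivative_continuous_on) (use Gd has_derivative_at_withinI in blast)
  have pc: "continuous_on UNIV p"
  proof -
    have "continuous_on UNIV (\<lambda>y. exp (ln (p y)))" by (intro continuous_intros lnc)
    then show ?thesis using pos by simp
  qed
  have pm[measurable]: "p \<in> borel_measurable borel" by (rule borel_measurable_continuous_onI[OF pc])
  have gp: "grad (\<lambda>z. ln (p z)) x = G x" for x by (rule grad_plain[OF Gd])
  define D0 where "D0 = density lborel (\<lambda>x. ennreal (p x))"
  interpret D0: prob_space D0
  proof
    show "emeasure D0 (space D0) = 1" unfolding D0_def using dens by (simp add: emeasure_density)
  qed
  have spD0: "space D0 = UNIV" unfolding D0_def by simp
  obtain c where c: "0 < ereal c" "ereal c < Liminf at_infinity (\<lambda>t::real. INF x\<in>{x. x $ k = t}.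
                   ereal (\<bar>grad (\<lambda>z. ln (p z)) x $ k\<bar> * norm x powr \<gamma>))"
    using ereal_dense2[OF cond_i] by blast
  have cpos: "c > 0" using c(1) by simp
  obtain b where b: "\<And>t::real. b \<le> norm t \<Longrightarrow> ereal c < (INF x\<in>{x. x $ k = t}. ereal (\<bar>grad (\<lambda>z. ln (p z)) x $ k\<bar> * norm x powr \<gamma>))"
    using less_LiminfD[OF c(2)] unfolding eventually_at_infinity by blast
  have bnd_i: "c < \<bar>G u $ k\<bar> * norm u powr \<gamma>" if "b \<le> \<bar>u $ k\<bar>" for u
  proof -
    have "ereal c < ereal (\<bar>grad (\<lambda>z. ln (p z)) u $ k\<bar> * norm u powr \<gamma>)"
      by (rule less_INF_D[OF b]) (use that in auto)
    then show ?thesis by (simp add: gp)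
  qed
  obtain C0 where C0: "Limsup at_top (\<lambda>t. ereal (measure D0 {x. norm x > t} * exp (t powr \<beta>))) < ereal C0"
    using ereal_dense2[OF cond_ii] unfolding D0_def by blast
  obtain t0 where t0: "\<And>t. t \<ge> t0 \<Longrightarrow> measure D0 {x. norm x > t} * exp (t powr \<beta>) < C0"
    using Limsup_lessD[OF C0] unfolding eventually_at_top_linorder by auto
  have C0pos: "C0 > 0"
  proof -
    have "0 \<le> measure D0 {x. norm x > t0} * exp (t0 powr \<beta>)" by simp
    then show ?thesis using t0[of t0] by linarith
  qed
  have tailb: "measure D0 {x. norm x > t} \<le> C0 * exp (- (t powr \<beta>))" if "t \<ge> t0" for t
  proof -
    have "measure D0 {x. norm x > t} * exp (t powr \<beta>) \<le> C0" using t0[OF that] by simp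
    then show ?thesis by (simp add: exp_minus field_simps)
  qed
  define T0 where "T0 = max b 1"
  define Tm where "Tm = T0 + 2"
  define u0 where "u0 = (T0 + 1) *\<^sub>R axis k (1::real)"
  define K where "K = cball u0 1"
  have T0: "T0 \<ge> 1" "T0 \<ge> b" unfolding T0_def by auto
  have u0k: "u0 $ k = T0 + 1" unfolding u0_def by simp
  have nu0: "norm u0 = T0 + 1" unfolding u0_def using T0 by simp
  have Kk: "T0 \<le> u $ k \<and> u $ k \<le> Tm" if "u \<in> K" for u
  proof -
    have "\<bar>(u - u0) $ k\<bar> \<le> 1" using that component_le_norm_cart[of "u - u0" k]
      unfolding K_def by (simp add: dist_norm norm_minus_commute)
    then show ?thesis using u0k unfolding Tm_def by auto
  qed
  have Kn: "norm u \<le> Tm" if "u \<in> K" for u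
  proof -
    have "norm u \<le> norm u0 + norm (u - u0)" by (metis add.commute diff_add_cancel norm_triangle_ineq)
    also have "\<dots> \<le> T0 + 1 + 1" using that unfolding K_def nu0 by (simp add: dist_norm norm_minus_commute)
    finally show ?thesis unfolding Tm_def by simp
  qed
  define c0 where "c0 = c / Tm powr \<gamma>"
  have Tm: "Tm > 0" unfolding Tm_def using T0 by simp
  have c0: "c0 > 0" unfolding c0_def using cpos Tm by simp
  have Kprop: "\<bar>G u $ k\<bar> \<ge> c0 \<and> 0 \<le> u $ k \<and> u $ k \<le> Tm" if "u \<in> K" for u
  proof -
    have uk: "T0 \<le> u $ k" "u $ k \<le> Tm" using Kk[OF that] by auto
    have "b \<le> \<bar>u $ k\<bar>" using uk T0 by auto
    then have cl: "c < \<bar>G u $ k\<bar> * norm u powr \<gamma>" by (rule bnd_i)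
    have "norm u powr \<gamma> \<le> Tm powr \<gamma>" by (rule powr_mono2) (use \<gamma>_pos Kn[OF that] in auto)
    then have "\<bar>G u $ k\<bar> * norm u powr \<gamma> \<le> \<bar>G u $ k\<bar> * Tm powr \<gamma>" by (rule mult_left_mono) simp
    then have "c \<le> \<bar>G u $ k\<bar> * Tm powr \<gamma>" using cl by simp
    then have "c0 \<le> \<bar>G u $ k\<bar>" unfolding c0_def using Tm by (simp add: divide_le_eq)
    then show ?thesis using uk T0 by auto
  qed
  define a0 where "a0 = measure D0 K"
  have Km[measurable]: "K \<in> sets borel" unfolding K_def by simp
  have a0pos: "a0 > 0"
  proof -
    have "emeasure D0 K > 0" unfolding D0_def K_def by (rule dens_pos_cball[OF pm pos]) simp
    then show ?thesis unfolding a0_def D0.emeasure_eq_measure by simp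
  qed
  have a0lt: "a0 < 1"
  proof -
    have sub: "cball (- u0) 1 \<subseteq> UNIV - K"
    proof
      fix u assume u: "u \<in> cball (- u0) 1"
      have "\<bar>(u + u0) $ k\<bar> \<le> 1" using u component_le_norm_cart[of "u + u0" k]
        by (simp add: dist_norm norm_minus_commute)
      then have "u $ k < T0" using u0k T0 by auto
      then show "u \<in> UNIV - K" using Kk by force
    qed
    have "emeasure D0 (cball (- u0) 1) > 0" unfolding D0_def by (rule dens_pos_cball[OF pm pos]) simp
    then have "measure D0 (cball (- u0) 1) > 0" unfolding D0.emeasure_eq_measure by simp
    also have "measure D0 (cball (- u0) 1) \<le> measure D0 (UNIV - K)"
      by (rule D0.finite_measure_mono[OF sub]) (simp add: D0_def)
    also have "measure D0 (UNIV - K) = 1 - a0"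
      unfolding a0_def using D0.prob_compl[of K] spD0 by (simp add: D0_def)
    finally show ?thesis by simp
  qed
  define Dd where "Dd = \<sigma>\<^sup>2 * c0 / 8"
  define E1 where "E1 = \<sigma>\<^sup>2 * c0\<^sup>2 / 64"
  have Dd: "Dd > 0" unfolding Dd_def using \<sigma>_pos c0 by simp
  have E1: "E1 > 0" unfolding E1_def using \<sigma>_pos c0 by simp
  define l1 where "l1 = Min {1, E1, Dd powr (2/3), sqrt (Dd / Tm), sqrt (Dd / max t0 1)}"
  have l1pos: "l1 > 0" unfolding l1_def using Dd E1 Tm by simp
  define Kc where "Kc = 1 / (a0 * (1 - a0))"
  have Kc: "Kc > 0" unfolding Kc_def using a0pos a0lt by simp
  define Cb where "Cb = Kc * (2 powr (real CARD('d) / 2) + C0)"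
  have ev: "\<forall>l>0. l < l1 \<longrightarrow> mh_gap (rescale_dens k l p) (mala_q \<sigma> (rescale_dens k l p))
            * ennreal (exp (l powr (- \<alpha>))) \<le> ennreal Cb"
  proof (intro allI impI)
    fix l :: real assume l: "l > 0" "l < l1"
    have l1: "l \<le> 1" "l \<le> E1" "l \<le> Dd powr (2/3)" "l \<le> sqrt (Dd / Tm)" "l \<le> sqrt (Dd / max t0 1)"
      using l(2) unfolding l1_def by auto
    have sq1: "l\<^sup>2 \<le> Dd / Tm"
    proof -
      have "l\<^sup>2 \<le> (sqrt (Dd / Tm))\<^sup>2" by (rule power_mono) (use l1(4) l in auto)
      then show ?thesis using Dd Tm by simp
    qed
    have lsmall: "l\<^sup>2 * Tm \<le> \<sigma>\<^sup>2 * c0 / 8" using sq1 Tm unfolding Dd_def by (simp add: field_simps)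
    have sq2: "l\<^sup>2 \<le> Dd / max t0 1"
    proof -
      have "l\<^sup>2 \<le> (sqrt (Dd / max t0 1))\<^sup>2" by (rule power_mono) (use l1(5) l in auto)
      then show ?thesis using Dd by simp
    qed
    have tt: "Dd / l\<^sup>2 \<ge> t0"
    proof -
      have m1: "max t0 1 > 0" by simp
      have l2: "l\<^sup>2 > 0" using l by simp
      have "l\<^sup>2 * max t0 1 \<le> Dd" using sq2 by (simp only: pos_le_divide_eq[OF m1])
      then have "max t0 1 \<le> Dd / l\<^sup>2" by (simp only: pos_le_divide_eq[OF l2] mult.commute)
      then show ?thesis by simp
    qed
    define Ct where "Ct = C0 * exp (- ((Dd / l\<^sup>2) powr \<beta>))"
    have tail: "measure (density lborel (\<lambda>x. ennreal (p x))) {x. norm x > (\<sigma>\<^sup>2 * c0 / 8) / l\<^sup>2} \<le> Ct"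
      using tailb[OF tt] unfolding Ct_def D0_def Dd_def .
    have a0': "a0 = measure (density lborel (\<lambda>x. ennreal (p x))) K" unfolding a0_def D0_def ..
    define Bl where "Bl = 2 powr (real CARD('d) / 2) * exp (- (\<sigma>\<^sup>2 * c0 / (4 * l))\<^sup>2 / (4 * \<sigma>\<^sup>2))"
    have gap: "mh_gap (rescale_dens k l p) (mala_q \<sigma> (rescale_dens k l p)) \<le> ennreal Kc * (ennreal Bl + ennreal Ct)"
      unfolding Kc_def Bl_def
      by (rule per_l_bound[OF pm pos dens Gc Gd \<sigma>_pos Km a0' a0pos a0lt c0 Kprop l(1) lsmall tail])
    define Ex where "Ex = exp (l powr (- \<alpha>))"
    have Bl0: "Bl \<ge> 0" and Ct0: "Ct \<ge> 0" unfolding Bl_def Ct_def using C0pos by auto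
    have b1: "Bl * Ex \<le> 2 powr (real CARD('d) / 2)"
    proof -
      have "(\<sigma>\<^sup>2 * c0 / (4 * l))\<^sup>2 / (4 * \<sigma>\<^sup>2) = E1 / l\<^sup>2"
        unfolding E1_def using \<sigma>_pos l by (simp add: field_simps power2_eq_square)
      moreover have "l powr (- \<alpha>) \<le> E1 / l\<^sup>2" by (rule expo_a) (use l l1 \<alpha> in auto)
      ultimately have "exp (- (\<sigma>\<^sup>2 * c0 / (4 * l))\<^sup>2 / (4 * \<sigma>\<^sup>2)) * Ex \<le> 1"
        unfolding Ex_def by (simp add: exp_add[symmetric])
      then show ?thesis unfolding Bl_def by (simp add: mult.assoc)
    qed
    have b2: "Ct * Ex \<le> C0"
    proof -
      have "l powr (- \<alpha>) \<le> (Dd / l\<^sup>2) powr \<beta>" by (rule expo_b) (use l l1 \<alpha> \<beta>_pos Dd in auto)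
      then have "exp (- ((Dd / l\<^sup>2) powr \<beta>)) * Ex \<le> 1"
        unfolding Ex_def by (simp add: exp_add[symmetric])
      then show ?thesis unfolding Ct_def using C0pos by (simp add: mult.assoc mult_left_le)
    qed
    have "mh_gap (rescale_dens k l p) (mala_q \<sigma> (rescale_dens k l p)) * ennreal Ex
        \<le> ennreal Kc * (ennreal Bl + ennreal Ct) * ennreal Ex"
      by (rule mult_right_mono[OF gap]) simp
    also have "\<dots> = ennreal (Kc * (Bl * Ex + Ct * Ex))"
    proof -
      have Ex0: "Ex \<ge> 0" unfolding Ex_def by simp
      have "ennreal Bl + ennreal Ct = ennreal (Bl + Ct)" by (rule ennreal_plus[symmetric]) (use Bl0 Ct0 in auto)
      moreover have "ennreal Kc * ennreal (Bl + Ct) = ennreal (Kc * (Bl + Ct))"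
        by (rule ennreal_mult[symmetric]) (use Kc Bl0 Ct0 in auto)
      moreover have "ennreal (Kc * (Bl + Ct)) * ennreal Ex = ennreal (Kc * (Bl + Ct) * Ex)"
        by (rule ennreal_mult[symmetric]) (use Kc Bl0 Ct0 Ex0 in auto)
      moreover have "Kc * (Bl + Ct) * Ex = Kc * (Bl * Ex + Ct * Ex)" by (simp only: distrib_left distrib_right mult.assoc)
      ultimately show ?thesis by simp
    qed
    also have "\<dots> \<le> ennreal Cb"
      unfolding Cb_def using b1 b2 Kc by (intro ennreal_leI mult_left_mono add_mono) auto
    finally show "mh_gap (rescale_dens k l p) (mala_q \<sigma> (rescale_dens k l p)) * ennreal (exp (l powr (- \<alpha>))) \<le> ennreal Cb"
      unfolding Ex_def .
  qed
  have "eventually (\<lambda>l. mh_gap (rescale_dens k l p) (mala_q \<sigma> (rescale_dens k l p))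
            * ennreal (exp (l powr (- \<alpha>))) \<le> ennreal Cb) (at_right 0)"
    unfolding eventually_at_right_field using l1pos ev by blast
  then have "Limsup (at_right 0) (\<lambda>l. mh_gap (rescale_dens k l p) (mala_q \<sigma> (rescale_dens k l p))
            * ennreal (exp (l powr (- \<alpha>)))) \<le> ennreal Cb"
    by (rule Limsup_bounded)
  also have "\<dots> < \<infinity>" by simp
  finally show ?thesis unfolding \<alpha>_def .
qed

end
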